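(* Let $R$ be an associative ring with identity and involution $*$, and let $a\in R^{\#}\cap R^{\dagger}$. Then $a\in R^{SEP}$ if and only if $(aa^*a^{\dagger}a^{\dagger}a^2)^k\in PE(R)$ for both $k=2$ and $k=3$.
   Context: An involution on $R$ is a map $x\mapsto x^*$ with $(x^* )^*=x$, $(x+y)^*=x^*+y^*$, $(xy)^*=y^*x^*$. An element $a$ is Moore–Penrose invertible if there is $b$ with $aba=a$, $bab=b$, $(ab)^*=ab$, $(ba)^*=ba$; such $b$ is unique, denoted $a^{\dagger}$, and $R^{\dagger}$ is the set of such $a$. An element $a$ is group invertible if there is $b$ with $aba=a$, $bab=b$, $ab=ba$; such $b$ is unique, denoted $a^{\#}$, and $R^{\#}$ is the set of such $a$. $PE(R)=\{e\in R: e^2=e=e^*\}$ is the set of projections. For $a\in R^{\#}\cap R^{\dagger}$, $a$ is SEP if $a^*=a^{\dagger}=a^{\#}$; $R^{SEP}$ denotes the set of SEP elements. *)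

theory Defs
  imports Main
begin

definition involution :: "('a::ring_1 \<Rightarrow> 'a) \<Rightarrow> bool" where
  "involution st \<longleftrightarrow>
     (\<forall>x. st (st x) = x) \<and>
     (\<forall>x y. st (x + y) = st x + st y) \<and>
     (\<forall>x y. st (x * y) = st y * st x)"

definition is_mp_inverse :: "('a::ring_1 \<Rightarrow> 'a) \<Rightarrow> 'a \<Rightarrow> 'a \<Rightarrow> bool" where
  "is_mp_inverse st a b \<longleftrightarrow>
     a * b * a = a \<and> b * a * b = b \<and> st (a * b) = a * b \<and> st (b * a) = b * a"

definition mp_invertible :: "('a::ring_1 \<Rightarrow> 'a) \<Rightarrow> 'a \<Rightarrow> bool" where
  "mp_invertible st a \<longleftrightarrow> (\<exists>b. is_mp_inverse st a b)"

definition mp_inv :: "('a::ring_1 \<Rightarrow> 'a) \<Rightarrow> 'a \<Rightarrow> 'a" where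
  "mp_inv st a = (THE b. is_mp_inverse st a b)"

definition is_group_inverse :: "'a::ring_1 \<Rightarrow> 'a \<Rightarrow> bool" where
  "is_group_inverse a b \<longleftrightarrow> a * b * a = a \<and> b * a * b = b \<and> a * b = b * a"

definition group_invertible :: "'a::ring_1 \<Rightarrow> bool" where
  "group_invertible a \<longleftrightarrow> (\<exists>b. is_group_inverse a b)"

definition group_inv :: "'a::ring_1 \<Rightarrow> 'a" where
  "group_inv a = (THE b. is_group_inverse a b)"

definition projection :: "('a::ring_1 \<Rightarrow> 'a) \<Rightarrow> 'a \<Rightarrow> bool" where
  "projection st e \<longleftrightarrow> e * e = e \<and> e = st e"

definition SEP :: "('a::ring_1 \<Rightarrow> 'a) \<Rightarrow> 'a \<Rightarrow> bool" where
  "SEP st a \<longleftrightarrow> group_invertible a \<and> mp_invertible st a \<and>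
     st a = mp_inv st a \<and> mp_inv st a = group_inv a"

end

theory Submission
  imports Defs
begin

lemma inv_mult: "involution st \<Longrightarrow> st (x * y) = st y * st x"
  by (simp add: involution_def)
lemma inv_inv: "involution st \<Longrightarrow> st (st x) = x"
  by (simp add: involution_def)

lemma mp_unique:
  assumes I: "involution st" and B: "is_mp_inverse st a b" and C: "is_mp_inverse st a c"
  shows "b = c"
proof -
  have b1: "a*b*a = a" "b*a*b = b" "st (a*b) = a*b" "st (b*a) = b*a" using B by (auto simp: is_mp_inverse_def)
  have c1: "a*c*a = a" "c*a*c = c" "st (a*c) = a*c" "st (c*a) = c*a" using C by (auto simp: is_mp_inverse_def)
  have "b = b * st (a*b)" using b1 by (metis mult.assoc)
  also have "... = b * st b * st a" using inv_mult[OF I] by (simp add: mult.assoc)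
  also have "... = b * st b * st (a*c*a)" using c1 by simp
  also have "... = b * (st (a*b) * st (a*c))" using inv_mult[OF I] by (simp add: mult.assoc)
  also have "... = b*a*c" using b1 c1 by (metis mult.assoc)
  finally have 1: "b = b*a*c" .
  have "c = st (c*a) * c" using c1 by simp
  also have "... = st a * st c * c" using inv_mult[OF I] by (simp add: mult.assoc)
  also have "... = st (a*b*a) * st c * c" using b1 by simp
  also have "... = (st (b*a) * st (c*a)) * c" using inv_mult[OF I] by (simp add: mult.assoc)
  also have "... = b*a*c" using b1 c1 by (metis mult.assoc)
  finally show ?thesis using 1 by simp
qed

lemma gi_unique:
  assumes B: "is_group_inverse a b" and C: "is_group_inverse a c"
  shows "b = c"
proof -
  have b1: "a*b*a = a" "b*a*b = b" "a*b = b*a" using B by (auto simp: is_group_inverse_def)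
  have c1: "a*c*a = a" "c*a*c = c" "a*c = c*a" using C by (auto simp: is_group_inverse_def)
  have "b = b*b*a" using b1 by (metis mult.assoc)
  also have "... = b*b*(a*c*a)" using c1 by simp
  also have "... = (b*b*a)*(c*a)" by (simp add: mult.assoc)
  also have "... = b*(a*c)" using b1 c1 by (metis mult.assoc)
  finally have 1: "b = b*a*c" by (simp add: mult.assoc)
  have "c = a*c*c" using c1 by (metis mult.assoc)
  also have "... = (a*b*a)*c*c" using b1 by simp
  also have "... = (b*a)*(a*c*c)" using b1 by (metis mult.assoc)
  also have "... = b*a*c" using c1 by (metis mult.assoc)
  finally show ?thesis using 1 by simp
qed


lemma core:
  fixes st :: "'a::ring_1 \<Rightarrow> 'a"
  assumes I: "involution st" and B: "is_mp_inverse st a b" and G: "is_group_inverse a g"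
  shows "(st a = b \<and> b = g) \<longleftrightarrow>
    (projection st ((a * st a * b * b * a ^ 2) ^ 2) \<and>
     projection st ((a * st a * b * b * a ^ 2) ^ 3))"
proof -
  have SM: "\<And>x y. st (x*y) = st y * st x" using inv_mult[OF I] .
  have SS: "\<And>x. st (st x) = x" using inv_inv[OF I] .
  have b1: "a*b*a = a" "b*a*b = b" "st (a*b) = a*b" "st (b*a) = b*a" using B by (auto simp: is_mp_inverse_def)
  have g1: "a*g*a = a" "g*a*g = g" "a*g = g*a" using G by (auto simp: is_group_inverse_def)
  have H1: "\<And>y. a*(b*(a*y)) = a*y" using b1 by (metis mult.assoc)
  have H2: "\<And>y. b*(a*(b*y)) = b*y" using b1 by (metis mult.assoc)
  have G1: "\<And>y. a*(g*(a*y)) = a*y" using g1 by (metis mult.assoc)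
  have G2: "\<And>y. g*(a*(g*y)) = g*y" using g1 by (metis mult.assoc)
  have D3: "\<And>y. a*(a*(g*y)) = a*y" using g1 by (metis mult.assoc)
  have D4: "\<And>y. g*(a*(a*y)) = a*y" using g1 by (metis mult.assoc)
  have D5: "\<And>y. a*(g*(g*y)) = g*y" "\<And>y. g*(g*(a*y)) = g*y" using g1 by (metis mult.assoc)+
  have E: "st (a*b) = a*b" using b1 by simp
  have D1: "\<And>y. st a*(a*(b*y)) = st a*y"
  proof -
    have "st a = st (a*b*a)" using b1 by simp
    also have "... = st a * (a*b)" by (metis SM b1(3))
    finally show "\<And>y. st a*(a*(b*y)) = st a*y" by (metis mult.assoc)
  qed
  have D2: "\<And>y. b*(a*(st a*y)) = st a*y"
  proof -
    have "st a = st (a*(b*a))" using b1 by (simp add: mult.assoc)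
    also have "... = (b*a) * st a" by (metis SM b1(4))
    finally show "\<And>y. b*(a*(st a*y)) = st a*y" by (metis mult.assoc)
  qed
  define P where "P = st (a*g)"
  have D7: "\<And>y. a*(b*(g*y)) = g*y" by (metis D5(1) H1)
  have D8: "\<And>y. a*(st a*(st b*(b*y))) = a*(b*y)"
  proof -
    have "st a * st b = b * a" using SM b1 by metis
    thus "\<And>y. a*(st a*(st b*(b*y))) = a*(b*y)" by (metis mult.assoc H1)
  qed
  have D10: "\<And>y. st a*(st g*y) = P*y" unfolding P_def using SM g1 by (metis mult.assoc)
  have PE: "a*b*P = a*b"
  proof -
    have "(a*g)*(a*b) = a*b" using G1 by (metis mult.assoc)
    hence "st ((a*g)*(a*b)) = a*b" using E by simp
    thus ?thesis unfolding P_def using SM E by metis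
  qed
  have D11: "\<And>y. b*(P*y) = b*y"
  proof -
    have "b*P = b*(a*b*P)" using H2 by (simp add: mult.assoc)
    also have "... = b" using PE b1 by (simp add: mult.assoc)
    finally show "\<And>y. b*(P*y) = b*y" by (metis mult.assoc)
  qed
  have D12: "\<And>y. st a*(P*y) = st a*y"
  proof -
    have "st a * P = st (a*g*a)" unfolding P_def using SM by (simp add: mult.assoc)
    thus "\<And>y. st a*(P*y) = st a*y" using g1 by (metis mult.assoc)
  qed
  have D13: "\<And>y. st g*(a*(b*y)) = st g*y"
  proof -
    have "st g * (a*b) = st (a*b*g)" using SM E by simp
    also have "a*b*g = g" using D7 by (metis mult.assoc mult_1_right)
    finally show "\<And>y. st g*(a*(b*y)) = st g*y" by (metis mult.assoc)
  qed
  have D14: "\<And>y. P*(b*y) = b*y"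
  proof -
    have bb: "b = st a * st b * b" using SM b1 by (metis mult.assoc)
    have "P * st a = st (a*(a*g))" unfolding P_def using SM by (simp add: mult.assoc)
    also have "a*(a*g) = a" using D3 by (metis mult_1_right)
    finally have "P * st a = st a" .
    hence "P*b = b" using bb by (metis mult.assoc)
    thus "\<And>y. P*(b*y) = b*y" by (metis mult.assoc)
  qed
  have D15: "\<And>y. st b*(b*(a*(st a*y))) = a*(b*y)"
  proof -
    have "st b * st a = a*b" using SM E by metis
    thus "\<And>y. st b*(b*(a*(st a*y))) = a*(b*y)" using D2 by (metis mult.assoc)
  qed
  define x where "x = a * st a * b * b * a ^ 2"
  have x_eq: "x = a*(st a*(b*(b*(a*a))))" unfolding x_def by (simp add: power2_eq_square mult.assoc)
  show ?thesis unfolding x_def[symmetric]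
  proof
    assume "st a = b \<and> b = g"
    hence sa: "st a = g" and bg: "b = g" by auto
    have ga: "g*(a*a) = a" "g*(g*a) = g" using D4[of 1] D5(2)[of 1] by simp_all
    have xp: "x = a*g" unfolding x_eq sa bg using ga by simp
    have pp: "a*g*(a*g) = a*g" using G1 by (metis mult.assoc)
    have sp: "st (a*g) = a*g" using E bg by simp
    have x2: "x^2 = a*g" using xp pp by (simp add: power2_eq_square)
    have x3: "x^3 = a*g" using xp pp by (simp add: power3_eq_cube)
    show "projection st (x^2) \<and> projection st (x^3)"
      unfolding projection_def x2 x3 using pp sp by simp
  next
    assume A: "projection st (x^2) \<and> projection st (x^3)"
    have A2: "x^2*x^2 = x^2" "st (x^2) = x^2" using A by (auto simp: projection_def)
    have A3: "x^3*x^3 = x^3" using A by (auto simp: projection_def)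
    have x32: "x^3 = x^2"
    proof -
      have "x^3*x^3 = x^2*x^2*x^2" by (simp add: power_add[symmetric])
      have h2: "x^2*x^2*x^2 = x^2" by (simp only: A2(1))
      have "x^3 = x^3*x^3" using A3 by simp
      also have "... = x^2" using h2 \<open>x^3*x^3 = x^2*x^2*x^2\<close> by simp
      finally show ?thesis .
    qed
    define z where "z = g*(g*(a*(st a*(st g*(a*(st a*(st g*(st b*b))))))))"
    have xz: "x*z = a*b"
    proof -
      have "x*z = a*(st a*(b*(b*(a*(a*(g*(g*(a*(st a*(st g*(a*(st a*(st g*(st b*b))))))))))))))"
        unfolding x_eq z_def by (simp only: mult.assoc)
      also have "... = a*(st a*(b*(b*(a*(st a*(st g*(a*(st a*(st g*(st b*b))))))))))"
        by (simp only: D3 G1)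
      also have "... = a*(st a*(b*(st a*(st g*(a*(st a*(st g*(st b*b))))))))"
        by (simp only: D2)
      also have "... = a*(st a*(b*(P*(a*(st a*(st g*(st b*b)))))))"
        by (simp only: D10[of "a*(st a*(st g*(st b*b)))"])
      also have "... = a*(st a*(b*(a*(st a*(st g*(st b*b))))))"
        by (simp only: D11)
      also have "... = a*(st a*(st a*(st g*(st b*b))))"
        by (simp only: D2)
      also have "... = a*(st a*(P*(st b*b)))"
        by (simp only: D10)
      also have "... = a*(st a*(st b*b))"
        by (simp only: D12)
      also have "... = a*b"
        using D8[of 1] by simp
      finally show ?thesis .
    qed
    have ez: "a*b*z = z" unfolding z_def using D7 by (simp add: mult.assoc)
    have ex: "a*b*x = x" unfolding x_eq using H1 by (simp add: mult.assoc)
    have xe: "x*(a*b) = a*b"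
    proof -
      have "x*x*(a*b) = x*(a*b)"
        using x32 xz by (metis mult.assoc power2_eq_square power3_eq_cube)
      hence "x*x*(a*b)*z = x*(a*b)*z" by simp
      thus ?thesis using xz ez by (metis mult.assoc)
    qed
    have xx: "x*x = x" using ex xe by (metis mult.assoc)
    have xs: "st x = x" using A2 xx by (simp add: power2_eq_square)
    have xeq: "x = a*b"
    proof -
      have "x = st x" using xs by simp
      also have "... = st x * st (a*b)" using ex SM by metis
      also have "... = a*b" using xs E xe by simp
      finally show ?thesis .
    qed
    have Lk: "\<And>y. a*(st a*(st g*(a*(b*(b*y))))) = a*(b*y)"
      using D13 D10 D14 by (simp add: mult.assoc)
    have s1: "a*(b*(b*(b*(a*a)))) = a*(b*(b*(b*(a*(a*(a*b))))))"
    proof -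
      have "x = x*(a*b)" using xe xeq by simp
      hence "st b*(b*x) = st b*(b*(x*(a*b)))" by simp
      thus ?thesis unfolding x_eq using D15 by (simp add: mult.assoc)
    qed
    have s2: "a*(b*(b*(a*a))) = a*(b*(b*(a*(a*(a*b)))))"
      using arg_cong[OF s1, of "\<lambda>t. a*(st a*(st g*t))"] Lk by simp
    have s3: "a*a = a*(a*(a*b))"
      using arg_cong[OF s2, of "\<lambda>t. a*(st a*(st g*t))"] Lk H1 by simp
    have aab: "a*(a*b) = a"
    proof -
      have "g*(a*a) = a" using D4[of 1] by simp
      moreover have "g*(a*(a*(a*b))) = a*(a*b)" using D4 by simp
      ultimately show ?thesis using s3 by metis
    qed
    have ep: "a*b = g*a"
    proof -
      have "g*(a*(a*b)) = g*a" using aab by simp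
      thus ?thesis using D4 by simp
    qed
    have eq: "a*b*(b*a) = a*b" using ep g1 by (metis mult.assoc)
    have qe: "b*a*(a*b) = a*b"
    proof -
      have "st (a*b*(b*a)) = st (a*b)" using eq by simp
      thus ?thesis using SM E b1 by metis
    qed
    have q: "b*a = a*b" using qe aab by (metis mult.assoc)
    have bg: "b = g"
    proof -
      have "b = b*a*b" using b1 by simp
      also have "... = g*a*b" using q ep by simp
      also have "... = g*(a*g)" using ep g1 by (metis mult.assoc)
      also have "... = g" using g1 by (metis mult.assoc)
      finally show ?thesis .
    qed
    have asa: "a*st a = a*b"
    proof -
      have "x = a*(st a*(g*(g*(a*a))))" unfolding x_eq bg ..
      also have "... = a*(st a*(g*a))" using D5 by (metis mult.assoc)
      also have "... = a*(st a*(a*b))" using ep by simp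
      also have "... = a*st a" using D1 by (metis mult_1_right)
      finally show ?thesis using xeq by simp
    qed
    have "st a = b*a*st a" using D2 by (metis mult.assoc mult_1_right)
    also have "... = b*a*b" using asa by (simp add: mult.assoc)
    also have "... = b" using b1 by simp
    finally show "st a = b \<and> b = g" using bg by simp
  qed
qed


theorem theorem4p2:
  fixes st :: "'a::ring_1 \<Rightarrow> 'a" and a :: 'a
  assumes "involution st"
    and "group_invertible a"
    and "mp_invertible st a"
  shows "SEP st a \<longleftrightarrow>
    (projection st ((a * st a * mp_inv st a * mp_inv st a * a ^ 2) ^ 2) \<and>
     projection st ((a * st a * mp_inv st a * mp_inv st a * a ^ 2) ^ 3))"
proof -
  obtain b where B: "is_mp_inverse st a b" using assms(3) by (auto simp: mp_invertible_def)
  obtain g where G: "is_group_inverse a g" using assms(2) by (auto simp: group_invertible_def)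
  have mb: "mp_inv st a = b" unfolding mp_inv_def
    by (rule the_equality[where P="is_mp_inverse st a", OF B]) (rule mp_unique[OF assms(1) _ B])
  have gg: "group_inv a = g" unfolding group_inv_def
    by (rule the_equality[where P="is_group_inverse a", OF G]) (rule gi_unique[OF _ G])
  have "SEP st a \<longleftrightarrow> (st a = b \<and> b = g)"
    unfolding SEP_def mb gg using assms(2) assms(3) by simp
  also have "... \<longleftrightarrow> (projection st ((a * st a * b * b * a ^ 2) ^ 2) \<and>
     projection st ((a * st a * b * b * a ^ 2) ^ 3))"
    by (rule core[OF assms(1) B G])
  finally show ?thesis unfolding mb .
qed

end
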